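(* Let $k\ge3$ and $0\le n<k-2$ be integers, let $\chi_1,\chi_2$ be primitive non-trivial Dirichlet characters with conductors $q_1,q_2$, and let $\gamma=\begin{pmatrix}a&b\\c&d\end{pmatrix}\in\Gamma_0(q_1q_2)$ with $c>0$. Then for all $u>0$, $$\Big|\sum_{A\ge1}\frac{\chi_1(A)}{A^{n+1}}\sum_{B\ge1}\overline{\chi_2}(B)B^{k-n-2}e^{2\pi AB(ia/c-u)}\Big|\ll_{k,n,c,q_2}\frac{1}{\sqrt u}.$$ *)

theory Defs
  imports Complex_Main "HOL-Number_Theory.Cong"
begin

definition dirichlet_char :: "nat \<Rightarrow> (nat \<Rightarrow> complex) \<Rightarrow> bool" where
  "dirichlet_char q \<chi> \<longleftrightarrow> q > 0 \<and> \<chi> 1 = 1 \<and>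
     (\<forall>m n. \<chi> (m * n) = \<chi> m * \<chi> n) \<and>
     (\<forall>n. \<chi> (n + q) = \<chi> n) \<and>
     (\<forall>n. \<chi> n = 0 \<longleftrightarrow> \<not> coprime n q)"

text \<open>Primitive character modulo q (so its conductor is q): no proper divisor d of q
  is an induced modulus.\<close>
definition primitive_dchar :: "nat \<Rightarrow> (nat \<Rightarrow> complex) \<Rightarrow> bool" where
  "primitive_dchar q \<chi> \<longleftrightarrow> dirichlet_char q \<chi> \<and>
     (\<forall>d. d dvd q \<and> d < q \<longrightarrow>
        \<not> (\<forall>n. coprime n q \<and> [n = 1] (mod d) \<longrightarrow> \<chi> n = 1))"

definition nontrivial_dchar :: "nat \<Rightarrow> (nat \<Rightarrow> complex) \<Rightarrow> bool" where
  "nontrivial_dchar q \<chi> \<longleftrightarrow> (\<exists>n. coprime n q \<and> \<chi> n \<noteq> 1)"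

end

theory Submission
  imports Defs "HOL-Number_Theory.Number_Theory" "HOL-Analysis.Analysis"
begin

lemma summ_real:
  fixes m :: nat
  shows "\<And>x::real. norm x < 1 \<Longrightarrow> summable (\<lambda>n. (real n + 1)^m * x^n)"
proof (induction m)
  case 0
  then show ?case by (simp add: summable_geometric)
next
  case (Suc m)
  have s: "summable (\<lambda>n. diffs (\<lambda>n. (real n + 1)^m) n * norm x ^ n)"
    by (rule termdiff_converges[where K=1]) (use Suc in auto)
  show ?case
  proof (rule summable_comparison_test[OF _ s])
    show "\<exists>N. \<forall>n\<ge>N. norm ((real n + 1) ^ Suc m * x ^ n) \<le> diffs (\<lambda>n. (real n + 1) ^ m) n * norm x ^ n"
    proof (intro exI allI impI)
      fix n :: nat
      have "(real n + 1)^m \<le> (real (Suc n) + 1)^m" by (intro power_mono) auto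
      then have "(real n + 1) * (real n + 1)^m * norm x ^ n \<le> (real n + 1) * (real (Suc n) + 1)^m * norm x ^ n"
        by (intro mult_right_mono mult_left_mono) auto
      then show "norm ((real n + 1) ^ Suc m * x ^ n) \<le> diffs (\<lambda>n. (real n + 1) ^ m) n * norm x ^ n"
        by (simp add: diffs_def norm_mult norm_power abs_mult power_abs add.commute)
    qed
  qed
qed

lemma nrm1: "norm ((of_nat n + 1 :: complex)) = real n + 1"
proof -
  have "(of_nat n + 1 :: complex) = of_nat (Suc n)" by simp
  then show ?thesis by (simp only: norm_of_nat)
qed

lemma summ_c:
  fixes g :: "nat \<Rightarrow> complex" and w :: complex
  assumes "norm w < 1" "\<And>B. norm (g B) \<le> 1"
  shows "summable (\<lambda>B. g B * (of_nat B + 1)^m * w^B)"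
proof (rule summable_comparison_test[OF _ summ_real[of "norm w" m]])
  show "\<exists>N. \<forall>n\<ge>N. norm (g n * (of_nat n + 1) ^ m * w ^ n) \<le> (real n + 1) ^ m * norm w ^ n"
  proof (intro exI allI impI)
    fix n :: nat
    have e: "norm ((of_nat n + 1 :: complex) ^ m) = (real n + 1)^m"
      by (metis norm_of_nat norm_power of_nat_Suc add.commute)
    have "norm (g n * (of_nat n + 1) ^ m * w ^ n) = norm (g n) * ((real n + 1) ^ m * norm w ^ n)"
      by (simp add: norm_mult norm_power nrm1)
    also have "\<dots> \<le> 1 * ((real n + 1) ^ m * norm w ^ n)"
      by (intro mult_right_mono assms(2)) auto
    finally show "norm (g n * (of_nat n + 1) ^ m * w ^ n) \<le> (real n + 1) ^ m * norm w ^ n" by simp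
  qed
qed (use assms in auto)

lemma key_bound:
  fixes p :: nat and \<delta> :: real
  assumes p: "p > 0" and d: "\<delta> > 0"
  shows "\<exists>K. \<forall>(g::nat\<Rightarrow>complex) w. (\<forall>B. g (B+p) = g B) \<and> (\<forall>B. norm (g B) \<le> 1) \<and> norm w < 1
     \<and> norm (1 - w^p) \<ge> \<delta> \<longrightarrow> norm (\<Sum>B. g B * (of_nat B + 1)^m * w^B) \<le> K"
proof (induction m rule: less_induct)
  case (less m)
  define P where "P = (\<lambda>i K. \<forall>(g::nat\<Rightarrow>complex) w. (\<forall>B. g (B+p) = g B) \<and> (\<forall>B. norm (g B) \<le> 1) \<and> norm w < 1
     \<and> norm (1 - w^p) \<ge> \<delta> \<longrightarrow> norm (\<Sum>B. g B * (of_nat B + 1)^i * w^B) \<le> K)"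
  have "\<forall>i. \<exists>K. i < m \<longrightarrow> P i K" using less unfolding P_def by blast
  then obtain Kf where Kf: "\<And>i. i < m \<Longrightarrow> P i (Kf i)" by metis
  define K where "K = (real p * real p ^ m + (\<Sum>i<m. real (m choose i) * real p ^ (m - i) * Kf i)) / \<delta>"
  show ?case
  proof (intro exI allI impI)
    fix g :: "nat \<Rightarrow> complex" and w :: complex
    assume h: "(\<forall>B. g (B+p) = g B) \<and> (\<forall>B. norm (g B) \<le> 1) \<and> norm w < 1 \<and> norm (1 - w^p) \<ge> \<delta>"
    then have per: "\<And>B. g (B+p) = g B" and gb: "\<And>B. norm (g B) \<le> 1" and w1: "norm w < 1"
      and wd: "norm (1 - w^p) \<ge> \<delta>" by auto
    define T where "T i = (\<Sum>B. g B * (of_nat B + 1)^i * w^B)" for i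
    have sm: "summable (\<lambda>B. g B * (of_nat B + 1)^i * w^B)" for i
      by (rule summ_c[OF w1 gb])
    have split: "T m = (\<Sum>B. g (B+p) * (of_nat (B+p) + 1)^m * w^(B+p)) + (\<Sum>B<p. g B * (of_nat B + 1)^m * w^B)"
      unfolding T_def by (rule suminf_split_initial_segment[OF sm])
    have trm: "g (B+p) * (of_nat (B+p) + 1)^m * w^(B+p) =
         w^p * (\<Sum>i\<le>m. of_nat (m choose i) * of_nat p ^ (m-i) * (g B * (of_nat B + 1)^i * w^B))" for B
    proof -
      have "(of_nat (B+p) + 1 :: complex)^m = ((of_nat B + 1) + of_nat p)^m" by (simp add: add_ac)
      also have "\<dots> = (\<Sum>i\<le>m. of_nat (m choose i) * (of_nat B + 1)^i * of_nat p ^ (m-i))"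
        by (rule binomial_ring)
      finally have "(of_nat (B+p) + 1 :: complex)^m = (\<Sum>i\<le>m. of_nat (m choose i) * (of_nat B + 1)^i * of_nat p ^ (m-i))" .
      then show ?thesis
        by (simp add: per sum_distrib_left sum_distrib_right power_add mult_ac)
    qed
    have "(\<Sum>B. g (B+p) * (of_nat (B+p) + 1)^m * w^(B+p)) =
          (\<Sum>B. w^p * (\<Sum>i\<le>m. of_nat (m choose i) * of_nat p ^ (m-i) * (g B * (of_nat B + 1)^i * w^B)))"
      by (simp only: trm)
    also have "\<dots> = w^p * (\<Sum>B. (\<Sum>i\<le>m. of_nat (m choose i) * of_nat p ^ (m-i) * (g B * (of_nat B + 1)^i * w^B)))"
      by (rule suminf_mult) (intro summable_sum summable_mult sm)
    also have "(\<Sum>B. (\<Sum>i\<le>m. of_nat (m choose i) * of_nat p ^ (m-i) * (g B * (of_nat B + 1)^i * w^B)))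
        = (\<Sum>i\<le>m. (\<Sum>B. of_nat (m choose i) * of_nat p ^ (m-i) * (g B * (of_nat B + 1)^i * w^B)))"
      by (rule suminf_sum) (intro summable_mult sm)
    also have "\<dots> = (\<Sum>i\<le>m. of_nat (m choose i) * of_nat p ^ (m-i) * T i)"
      unfolding T_def by (intro sum.cong refl suminf_mult) (rule sm)
    also have "\<dots> = (\<Sum>i<m. of_nat (m choose i) * of_nat p ^ (m-i) * T i) + T m"
      by (simp add: lessThan_Suc_atMost[symmetric])
    finally have eq: "T m = w^p * ((\<Sum>i<m. of_nat (m choose i) * of_nat p ^ (m-i) * T i) + T m)
                   + (\<Sum>B<p. g B * (of_nat B + 1)^m * w^B)" using split by simp
    define R where "R = (\<Sum>i<m. of_nat (m choose i) * of_nat p ^ (m-i) * T i)"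
    define bd where "bd = (\<Sum>B<p. g B * (of_nat B + 1)^m * w^B)"
    have eq2: "T m * (1 - w^p) = w^p * R + bd" using eq unfolding R_def bd_def
      by (simp add: algebra_simps)
    have wp: "norm (w^p) \<le> 1" using w1 by (simp add: norm_power power_le_one)
    have Rb: "norm R \<le> (\<Sum>i<m. real (m choose i) * real p ^ (m - i) * Kf i)"
      unfolding R_def
    proof (rule order.trans[OF norm_sum sum_mono])
      fix i assume "i \<in> {..<m}"
      then have "norm (T i) \<le> Kf i" using Kf[of i] h unfolding P_def T_def by auto
      then show "norm (of_nat (m choose i) * of_nat p ^ (m-i) * T i :: complex) \<le> real (m choose i) * real p ^ (m - i) * Kf i"
        by (simp add: norm_mult norm_power mult_left_mono)
    qed
    have bdb: "norm bd \<le> real p * real p ^ m"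
      unfolding bd_def
    proof (rule order.trans[OF norm_sum])
      have "(\<Sum>B<p. norm (g B * (of_nat B + 1)^m * w^B)) \<le> (\<Sum>B<p. real p ^ m)"
      proof (rule sum_mono)
        fix B assume "B \<in> {..<p}"
        then have "real B + 1 \<le> real p" by auto
        then have pm: "(real B + 1)^m \<le> real p ^ m" by (intro power_mono) auto
        have e: "norm ((of_nat B + 1 :: complex) ^ m) = (real B + 1)^m"
          by (metis norm_of_nat norm_power of_nat_Suc add.commute)
        have "norm (g B * (of_nat B + 1)^m * w^B) = norm (g B) * (real B + 1)^m * norm w ^ B"
          by (simp add: norm_mult norm_power nrm1)
        also have "\<dots> \<le> 1 * real p ^ m * 1"
          using gb[of B] pm w1 by (intro mult_mono power_le_one) auto
        finally show "norm (g B * (of_nat B + 1)^m * w^B) \<le> real p ^ m" by simp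
      qed
      then show "(\<Sum>B<p. norm (g B * (of_nat B + 1)^m * w^B)) \<le> real p * real p ^ m" by simp
    qed
    have "\<delta> * norm (T m) \<le> norm (T m * (1 - w^p))"
      using wd by (simp add: norm_mult mult_right_mono mult.commute[of "norm (T m)"])
    also have "\<dots> \<le> norm (w^p) * norm R + norm bd" unfolding eq2
      by (metis norm_mult norm_triangle_ineq)
    also have "\<dots> \<le> 1 * (\<Sum>i<m. real (m choose i) * real p ^ (m - i) * Kf i) + real p * real p ^ m"
      by (intro add_mono mult_mono wp Rb bdb) auto
    finally have "\<delta> * norm (T m) \<le> real p * real p ^ m + (\<Sum>i<m. real (m choose i) * real p ^ (m - i) * Kf i)"
      by simp
    then show "norm (\<Sum>B. g B * (of_nat B + 1)^m * w^B) \<le> K"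
      unfolding K_def T_def using d by (simp add: pos_le_divide_eq mult.commute)
  qed
qed
lemma dchar_period:
  assumes "dirichlet_char q \<psi>" shows "\<psi> (x + j*q) = \<psi> x"
proof (induction j)
  case (Suc j)
  have "\<psi> (x + Suc j * q) = \<psi> ((x + j*q) + q)" by (simp add: add_ac)
  also have "\<dots> = \<psi> (x + j*q)" using assms unfolding dirichlet_char_def by blast
  finally show ?case using Suc by simp
qed simp

lemma dchar_mod:
  assumes "dirichlet_char q \<psi>" shows "\<psi> x = \<psi> (x mod q)"
  using dchar_period[OF assms, of "x mod q" "x div q"] by simp

lemma dchar_pow:
  assumes "dirichlet_char q \<psi>" shows "\<psi> (x^j) = \<psi> x ^ j"
proof (induction j)
  case 0 then show ?case using assms unfolding dirichlet_char_def by simp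
next
  case (Suc j)
  have "\<psi> (x^Suc j) = \<psi> (x * x^j)" by simp
  also have "\<dots> = \<psi> x * \<psi> (x^j)" using assms unfolding dirichlet_char_def by blast
  finally show ?case using Suc by simp
qed

lemma dchar_norm:
  assumes "dirichlet_char q \<psi>" shows "norm (\<psi> x) \<le> 1"
proof (cases "coprime x q")
  case False
  then have "\<psi> x = 0" using assms unfolding dirichlet_char_def by blast
  then show ?thesis by simp
next
  case True
  have q: "q > 0" and one: "\<psi> 1 = 1" using assms unfolding dirichlet_char_def by auto
  have "[x ^ totient q = 1] (mod q)" by (rule euler_theorem[OF True])
  then have "x ^ totient q mod q = 1 mod q" by (simp only: Cong.cong_def)
  then have "\<psi> (x ^ totient q) = \<psi> 1"
  proof -
    assume mm: "x ^ totient q mod q = 1 mod q"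
    have "\<psi> (x ^ totient q) = \<psi> (x ^ totient q mod q)" by (rule dchar_mod[OF assms])
    also have "\<dots> = \<psi> (1 mod q)" by (simp only: mm)
    also have "\<dots> = \<psi> 1" by (rule dchar_mod[OF assms, symmetric])
    finally show ?thesis .
  qed
  then have "\<psi> x ^ totient q = 1" by (simp only: dchar_pow[OF assms] one)
  then have "norm (\<psi> x ^ totient q) = 1" by simp
  then have "norm (\<psi> x) ^ totient q = 1" by (simp only: norm_power)
  moreover have "totient q > 0" using q by (simp add: totient_gt_0_iff)
  ultimately have "norm (\<psi> x) = 1"
    using power_eq_imp_eq_base[of "norm (\<psi> x)" "totient q" 1] by simp
  then show ?thesis by simp
qed

lemma nontriv_gt1:
  assumes "dirichlet_char q \<psi>" "nontrivial_dchar q \<psi>" shows "q > 1"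
proof (rule ccontr)
  assume "\<not> q > 1"
  moreover have "q > 0" using assms unfolding dirichlet_char_def by auto
  ultimately have q1: "q = 1" by simp
  have "\<psi> x = 1" for x
  proof -
    have "\<psi> x = \<psi> (x mod q)" by (rule dchar_mod[OF assms(1)])
    also have "\<dots> = \<psi> (1 mod q)" using q1 by simp
    also have "\<dots> = \<psi> 1" by (rule dchar_mod[OF assms(1), symmetric])
    finally show ?thesis using assms unfolding dirichlet_char_def by simp
  qed
  then show False using assms(2) unfolding nontrivial_dchar_def by blast
qed

lemma cos_bound:
  fixes M :: nat assumes "M > 0"
  shows "\<exists>x0. 0 \<le> x0 \<and> x0 < 1 \<and> (\<forall>N::int. \<not> int M dvd N \<longrightarrow> cos (2*pi* of_int N / real M) \<le> x0)"
proof -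
  define S where "S = insert 0 ((\<lambda>j. cos (2*pi*real j / real M)) ` {1..<M})"
  have fin: "finite S" unfolding S_def by simp
  have lt: "s < 1" if "s \<in> S" for s
  proof -
    have ne: "cos (2*pi*real j / real M) \<noteq> 1" if j: "j \<in> {1..<M}" for j
    proof
      assume c1: "cos (2*pi*real j / real M) = 1"
      then obtain n :: int where "2*pi*real j / real M = of_int n * 2 * pi"
        using cos_one_2pi_int by blast
      then have "real j = of_int n * real M" using assms by (simp add: field_simps)
      then have "int j = n * int M" by (metis of_int_eq_iff of_int_mult of_int_of_nat_eq)
      then have "int M dvd int j" by simp
      then have "M dvd j" by simp
      with j show False by (auto dest: dvd_imp_le)
    qed
    from that consider "s = 0" | j where "j \<in> {1..<M}" "s = cos (2*pi*real j / real M)"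
      unfolding S_def by blast
    then show ?thesis
    proof cases
      case 2
      then show ?thesis using ne[OF 2(1)] cos_le_one[of "2*pi*real j / real M"] by linarith
    qed simp
  qed
  define x0 where "x0 = Max S"
  have x0S: "x0 \<in> S" unfolding x0_def by (rule Max_in[OF fin]) (simp add: S_def)
  have "0 \<le> x0" unfolding x0_def using fin by (simp add: S_def)
  moreover have "x0 < 1" using lt x0S by blast
  moreover have "cos (2*pi* of_int N / real M) \<le> x0" if "\<not> int M dvd N" for N :: int
  proof -
    define j where "j = nat (N mod int M)"
    have jj: "int j = N mod int M" unfolding j_def using assms by simp
    have m0: "N mod int M \<noteq> 0" using that by (simp add: dvd_eq_mod_eq_0)
    have m1: "0 \<le> N mod int M" "N mod int M < int M" using assms by simp_all
    have j1: "j \<in> {1..<M}" using jj m0 m1 by auto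
    have NN: "N = int j + (N div int M) * int M" using jj by simp
    have NR: "(of_int N :: real) = real j + of_int (N div int M) * real M"
      by (subst NN) simp
    have "2*pi* of_int N / real M = 2*pi*real j / real M + (2*pi) * of_int (N div int M)"
      unfolding NR using assms by (simp add: field_simps)
    then have "cos (2*pi* of_int N / real M) = cos (2*pi*real j / real M)"
      by (simp add: cos_add)
    also have "\<dots> \<le> x0" unfolding x0_def using fin j1 by (intro Max_ge) (auto simp: S_def)
    finally show ?thesis .
  qed
  ultimately show ?thesis by blast
qed
lemma powr32: "x > 0 \<Longrightarrow> (x::real) powr (-3/2) = 1 / (x * sqrt x)"
proof -
  assume x: "x > 0"
  have e: "(3/2::real) = 1 + 1/2" by simp
  have "x powr (3/2) = x powr 1 * x powr (1/2)" by (simp only: e powr_add)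
  also have "\<dots> = x * sqrt x"
  proof -
    have x0: "0 \<le> x" using x by simp
    show ?thesis by (simp only: powr_one[OF x0] powr_half_sqrt[OF x0])
  qed
  finally have f32: "x powr (3/2) = x * sqrt x" .
  have m: "(-3/2::real) = - (3/2)" by simp
  have "x powr (-3/2) = inverse (x powr (3/2))" by (simp only: m powr_minus)
  then show ?thesis by (simp only: f32 inverse_eq_divide)
qed
lemma summ32: "summable (\<lambda>A. real (Suc A) powr (-3/2))"
proof -
  have "summable (\<lambda>n. real n powr (-3/2))" by (simp add: summable_real_powr_iff)
  from summable_ignore_initial_segment[OF this, of 1] show ?thesis by simp
qed
lemma notcop: "(q1::nat) > 1 \<Longrightarrow> q1 dvd x \<Longrightarrow> \<not> coprime x q1"
  using coprime_common_divisor_nat by fastforce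
lemma cop_a: "a * d - b * (c::int) = 1 \<Longrightarrow> int M dvd c \<Longrightarrow> coprime a (int M)"
proof (rule coprimeI)
  fix x assume "a * d - b * c = 1" "int M dvd c" "x dvd a" "x dvd int M"
  then have "x dvd a * d - b * c" by (meson dvd_diff dvd_mult2 dvd_mult dvd_trans)
  then show "is_unit x" using \<open>a * d - b * c = 1\<close> by simp
qed
theorem lemma2p8:
  fixes k n q2 :: nat and c :: int
  assumes "k \<ge> 3" and "n < k - 2" and "c > 0"
  shows "\<exists>C::real. \<forall>(\<chi>1 :: nat \<Rightarrow> complex) (\<chi>2 :: nat \<Rightarrow> complex) (q1 :: nat) (a :: int) (b :: int) (d :: int) (u :: real).
     primitive_dchar q1 \<chi>1 \<and> nontrivial_dchar q1 \<chi>1 \<and>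
     primitive_dchar q2 \<chi>2 \<and> nontrivial_dchar q2 \<chi>2 \<and>
     a * d - b * c = 1 \<and> int (q1 * q2) dvd c \<and> u > 0 \<longrightarrow>
     norm (\<Sum>A. \<chi>1 (Suc A) / of_nat (Suc A) ^ (n + 1) *
             (\<Sum>B. cnj (\<chi>2 (Suc B)) * of_nat (Suc B) ^ (k - n - 2) *
                  exp (2 * of_real pi * of_nat (Suc A) * of_nat (Suc B) *
                       (\<i> * of_int a / of_int c - of_real u))))
       \<le> C / sqrt u"
proof (cases "q2 = 0")
  case True
  then show ?thesis by (auto simp: primitive_dchar_def dirichlet_char_def)
next
  case False
  then have q2p: "q2 > 0" by simp
  define M where "M = nat (c div int q2)"
  obtain x0 where x0: "0 \<le> x0" "x0 < 1"
    and x0c: "M > 0 \<Longrightarrow> \<forall>N::int. \<not> int M dvd N \<longrightarrow> cos (2*pi* of_int N / real M) \<le> x0"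
  proof (cases "M > 0")
    case True then show ?thesis using cos_bound[OF True] that by blast
  next
    case False then show ?thesis using that[of 0] by simp
  qed
  define \<delta> where "\<delta> = 1 - x0"
  have \<delta>p: "\<delta> > 0" using x0 by (simp add: \<delta>_def)
  obtain K where K: "\<forall>(g::nat\<Rightarrow>complex) w. (\<forall>B. g (B+q2) = g B) \<and> (\<forall>B. norm (g B) \<le> 1) \<and> norm w < 1
     \<and> norm (1 - w^q2) \<ge> \<delta> \<longrightarrow> norm (\<Sum>B. g B * (of_nat B + 1)^(k-n-2) * w^B) \<le> K"
    using key_bound[OF q2p \<delta>p, of "k-n-2"] by blast
  define K3 where "K3 = (\<Sum>B. (real B + 1)^(k-n-2) * exp(-1::real)^B)"
  have K3s: "summable (\<lambda>B. (real B + 1)^(k-n-2) * exp(-1::real)^B)" by (rule summ_real) simp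
  have K3nn: "K3 \<ge> 0" unfolding K3_def by (intro suminf_nonneg K3s) simp
  define K4 where "K4 = max K K3"
  have K4nn: "K4 \<ge> 0" using K3nn by (simp add: K4_def)
  define Z where "Z = (\<Sum>A. real (Suc A) powr (-3/2))"
  show ?thesis
  proof (intro exI[of _ "K4 * Z"] allI impI)
    fix \<chi>1 \<chi>2 :: "nat \<Rightarrow> complex" and q1 :: nat and a b d :: int and u :: real
    assume H: "primitive_dchar q1 \<chi>1 \<and> nontrivial_dchar q1 \<chi>1 \<and>
     primitive_dchar q2 \<chi>2 \<and> nontrivial_dchar q2 \<chi>2 \<and>
     a * d - b * c = 1 \<and> int (q1 * q2) dvd c \<and> u > 0"
    have dc1: "dirichlet_char q1 \<chi>1" and dc2: "dirichlet_char q2 \<chi>2"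
      using H by (auto simp: primitive_dchar_def)
    have q1g: "q1 > 1" using nontriv_gt1[OF dc1] H by blast
    have u0: "u > 0" and adbc: "a*d - b*c = 1" and dv: "int (q1*q2) dvd c" using H by auto
    obtain e where ce: "c = int (q1*q2) * e" using dv by (elim dvdE)
    have pq: "int (q1*q2) > 0" using q1g q2p by simp
    have "0 < int (q1*q2) * e" using ce assms(3) by simp
    then have e0: "e > 0" using pq by (rule zero_less_mult_pos)
    have cdiv: "c div int q2 = int q1 * e" using ce q2p by (simp add: mult_ac)
    have Me: "int M = int q1 * e" unfolding M_def cdiv using e0 by simp
    have "int q1 * e > 0" using q1g e0 by simp
    with Me have "int M > 0" by simp
    then have Mp: "M > 0" by simp
    have cM: "c = int q2 * int M" using ce Me by (simp add: mult_ac)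
    have copM: "coprime a (int M)" by (rule cop_a[OF adbc]) (use cM in simp)
    have "int q1 dvd int M" using Me by simp
    then have q1M: "q1 dvd M" by simp
    define X :: complex where "X = \<i> * of_int a / of_int c - of_real u"
    define w where "w A = exp (2 * of_real pi * of_nat (Suc A) * X)" for A
    define g where "g B = cnj (\<chi>2 (Suc B))" for B
    have gper: "\<forall>B. g (B + q2) = g B"
    proof
      fix B
      have "\<chi>2 (Suc B + q2) = \<chi>2 (Suc B)" using dc2 unfolding dirichlet_char_def by blast
      then show "g (B + q2) = g B" by (simp add: g_def)
    qed
    have gb: "\<forall>B. norm (g B) \<le> 1" using dchar_norm[OF dc2] by (simp add: g_def)
    have nw: "norm (w A) = exp (- (2*pi*real (Suc A) * u))" for A unfolding w_def X_def by simp
    have w1: "norm (w A) < 1" for A using u0 by (simp add: nw)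
    define S where "S A = (\<Sum>B. g B * (of_nat B + 1)^(k-n-2) * (w A)^B)" for A
    have inner: "(\<Sum>B. cnj (\<chi>2 (Suc B)) * of_nat (Suc B) ^ (k - n - 2) *
                  exp (2 * of_real pi * of_nat (Suc A) * of_nat (Suc B) * X)) = w A * S A" for A
    proof -
      have tm: "cnj (\<chi>2 (Suc B)) * of_nat (Suc B) ^ (k - n - 2) *
                  exp (2 * of_real pi * of_nat (Suc A) * of_nat (Suc B) * X)
             = w A * (g B * (of_nat B + 1)^(k-n-2) * (w A)^B)" for B
      proof -
        have "2 * of_real pi * of_nat (Suc A) * of_nat (Suc B) * X = of_nat (Suc B) * (2 * of_real pi * of_nat (Suc A) * X)"
          by (simp add: mult_ac)
        then have "exp (2 * of_real pi * of_nat (Suc A) * of_nat (Suc B) * X) = w A ^ Suc B"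
          unfolding w_def by (simp only: exp_of_nat_mult)
        then have E: "exp (2 * of_real pi * of_nat (Suc A) * of_nat (Suc B) * X) = w A * w A ^ B"
          by (simp only: power_Suc)
        have N: "(of_nat (Suc B) :: complex) = of_nat B + 1" by simp
        show ?thesis unfolding g_def E unfolding N by (simp only: mult_ac)
      qed
      have "(\<Sum>B. cnj (\<chi>2 (Suc B)) * of_nat (Suc B) ^ (k - n - 2) *
                  exp (2 * of_real pi * of_nat (Suc A) * of_nat (Suc B) * X))
           = (\<Sum>B. w A * (g B * (of_nat B + 1)^(k-n-2) * (w A)^B))"
        by (simp only: tm)
      also have "\<dots> = w A * S A" unfolding S_def
        by (rule suminf_mult) (rule summ_c[OF w1 gb[rule_format]])
      finally show ?thesis .
    qed
    have Sb: "norm (S A) \<le> K" if ch: "\<chi>1 (Suc A) \<noteq> 0" for A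
    proof -
      have ndvd: "\<not> int M dvd int (Suc A) * a"
      proof
        assume "int M dvd int (Suc A) * a"
        then have "int M dvd int (Suc A)"
          using coprime_dvd_mult_left_iff[of "int M" a "int (Suc A)"] copM
          by (simp add: coprime_commute)
        then have "M dvd Suc A" by (simp only: of_nat_dvd_iff)
        then have "q1 dvd Suc A" using q1M by (rule dvd_trans[rotated])
        then have "\<not> coprime (Suc A) q1" using notcop q1g by blast
        then have "\<chi>1 (Suc A) = 0" using dc1 by (simp add: dirichlet_char_def)
        with ch show False by simp
      qed
      define zz where "zz = of_nat q2 * (2 * of_real pi * of_nat (Suc A) * X)"
      have wq: "w A ^ q2 = exp zz" unfolding w_def zz_def by (simp only: exp_of_nat_mult)
      have Rez: "Re zz = - (real q2 * 2*pi*real (Suc A) * u)" unfolding zz_def X_def by simp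
      have Imz: "Im zz = 2*pi* of_int (int (Suc A) * a) / real M"
      proof -
        have "Im zz = real q2 * 2*pi*real (Suc A) * of_int a / of_int c" unfolding zz_def X_def by simp
        also have "(of_int c :: real) = real q2 * real M" using cM by simp
        finally have I1: "Im zz = real q2 * 2*pi*real (Suc A) * of_int a / (real q2 * real M)" .
        have q2r: "real q2 \<noteq> 0" using q2p by simp
        have Mr: "real M \<noteq> 0" using Mp by simp
        have "real q2 * 2*pi*real (Suc A) * of_int a / (real q2 * real M) = real q2 * (2*pi*real (Suc A) * of_int a) / (real q2 * real M)"
          by (simp only: mult.assoc)
        also have "\<dots> = 2*pi*real (Suc A) * of_int a / real M"
          using q2r by (rule mult_divide_mult_cancel_left)
        also have "\<dots> = 2*pi* of_int (int (Suc A) * a) / real M" by simp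
        finally show ?thesis using I1 by simp
      qed
      have cosb: "cos (Im zz) \<le> x0" using x0c[OF Mp] ndvd unfolding Imz by blast
      have ez: "exp (Re zz) \<le> 1" using u0 unfolding Rez by simp
      have "Re (w A ^ q2) = exp (Re zz) * cos (Im zz)" unfolding wq by (simp add: Re_exp)
      also have "\<dots> \<le> exp (Re zz) * x0" by (intro mult_left_mono cosb) simp
      also have "\<dots> \<le> 1 * x0" by (intro mult_right_mono ez x0)
      finally have "\<delta> \<le> Re (1 - w A ^ q2)" unfolding \<delta>_def by simp
      also have "\<dots> \<le> norm (1 - w A ^ q2)" by (rule complex_Re_le_cmod)
      finally have "\<delta> \<le> norm (1 - w A ^ q2)" .
      then show ?thesis using K gper gb w1[of A] unfolding S_def by blast
    qed
    have Ib: "norm (w A * S A) \<le> K4 / sqrt (real (Suc A) * u)" if ch: "\<chi>1 (Suc A) \<noteq> 0" for A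
    proof -
      define t where "t = 2*pi*real (Suc A) * u"
      have aup: "real (Suc A) * u > 0" using u0 by simp
      have teq: "t = (2*pi) * (real (Suc A) * u)" by (simp add: t_def mult_ac)
      have "1 * (real (Suc A) * u) \<le> (2*pi) * (real (Suc A) * u)"
        by (intro mult_right_mono) (use pi_gt3 aup in auto)
      then have au: "real (Suc A) * u \<le> t" unfolding teq by simp
      have nw': "norm (w A) = exp (-t)" using nw t_def by simp
      have sp: "sqrt (real (Suc A) * u) > 0" using aup by simp
      show ?thesis
      proof (cases "t < 1")
        case True
        have s1: "sqrt (real (Suc A) * u) \<le> 1" using au True by simp
        have "norm (w A * S A) \<le> 1 * norm (S A)" unfolding norm_mult
          by (intro mult_right_mono) (use w1[of A] in auto)
        also have "\<dots> \<le> K" using Sb[OF ch] by simp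
        also have "K \<le> K4" by (simp add: K4_def)
        also have "K4 \<le> K4 / sqrt (real (Suc A) * u)" using K4nn sp s1
          by (simp add: le_divide_eq mult_left_le)
        finally show ?thesis .
      next
        case False
        have wle: "norm (w A) \<le> exp (-1)" using False nw' by simp
        have "norm (S A) \<le> (\<Sum>B. (real B + 1)^(k-n-2) * norm (w A)^B)"
          unfolding S_def
        proof (rule norm_suminf_le)
          show "norm (g B * (of_nat B+1)^(k-n-2) * w A ^ B) \<le> (real B + 1)^(k-n-2) * norm (w A)^B" for B
          proof -
            have "norm (g B * (of_nat B+1)^(k-n-2) * w A ^ B) = norm (g B) * ((real B + 1)^(k-n-2) * norm (w A)^B)"
              by (simp add: norm_mult norm_power nrm1)
            also have "\<dots> \<le> 1 * ((real B + 1)^(k-n-2) * norm (w A)^B)"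
              by (intro mult_right_mono) (use gb in auto)
            finally show ?thesis by simp
          qed
          show "summable (\<lambda>B. (real B + 1)^(k-n-2) * norm (w A)^B)" by (rule summ_real) (simp add: w1)
        qed
        also have "\<dots> \<le> K3" unfolding K3_def
        proof (rule suminf_le)
          show "(real B + 1)^(k-n-2) * norm (w A)^B \<le> (real B + 1)^(k-n-2) * exp (-1)^B" for B
            by (intro mult_left_mono power_mono wle) auto
          show "summable (\<lambda>B. (real B + 1)^(k-n-2) * norm (w A)^B)" by (rule summ_real) (simp add: w1)
        qed (rule K3s)
        finally have SK3: "norm (S A) \<le> K3" .
        have t1: "t \<ge> 1" using False by simp
        have "norm (w A * S A) \<le> exp (-t) * K3" unfolding norm_mult nw' by (intro mult_left_mono SK3) simp
        also have "exp (-t) \<le> 1 / t"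
        proof -
          have "t \<le> exp t" using exp_ge_add_one_self[of t] by linarith
          then show ?thesis using t1 by (simp add: exp_minus field_simps)
        qed
        then have "exp (-t) * K3 \<le> 1 / t * K3" by (intro mult_right_mono K3nn)
        also have "\<dots> = K3 / t" by simp
        also have "\<dots> \<le> K4 / sqrt (real (Suc A) * u)"
        proof (rule frac_le)
          show "K3 \<le> K4" by (simp add: K4_def)
          have "sqrt (real (Suc A) * u) \<le> sqrt t" using au by simp
          also have "sqrt t \<le> t"
          proof -
            have "1 \<le> sqrt t" using t1 by simp
            then have "sqrt t * 1 \<le> sqrt t * sqrt t" by (intro mult_left_mono) auto
            also have "\<dots> = t" using t1 by simp
            finally show ?thesis by simp
          qed
          finally show "sqrt (real (Suc A) * u) \<le> t" .
        qed (use K4nn sp in auto)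
        finally show ?thesis .
      qed
    qed
    define bnd where "bnd A = K4 / sqrt u * real (Suc A) powr (-3/2)" for A
    have bs: "summable bnd" unfolding bnd_def by (intro summable_mult summ32)
    have bnn: "bnd A \<ge> 0" for A unfolding bnd_def using K4nn u0
      by (intro mult_nonneg_nonneg divide_nonneg_nonneg) auto
    have tb: "norm (\<chi>1 (Suc A) / of_nat (Suc A) ^ (n + 1) * (w A * S A)) \<le> bnd A" for A
    proof (cases "\<chi>1 (Suc A) = 0")
      case True then show ?thesis using bnn by simp
    next
      case False
      define x where "x = real (Suc A)"
      have xp: "x \<ge> 1" unfolding x_def by simp
      have xn: "x \<le> x ^ (n+1)" using xp by (simp add: power_increasing[of 1 "n+1" x, simplified])
      have "norm (\<chi>1 (Suc A) / of_nat (Suc A) ^ (n + 1) * (w A * S A)) = norm (\<chi>1 (Suc A)) / x ^ (n+1) * norm (w A * S A)"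
        unfolding x_def by (simp only: norm_mult norm_divide norm_power norm_of_nat)
      also have "\<dots> \<le> 1 / x * (K4 / sqrt (x * u))"
      proof (intro mult_mono frac_le)
        show "norm (w A * S A) \<le> K4 / sqrt (x * u)" using Ib[OF False] by (simp add: x_def)
      qed (use dchar_norm[OF dc1] xp xn in auto)
      also have "\<dots> = bnd A"
      proof -
        have p: "x powr (-3/2) = 1 / (x * sqrt x)" using xp by (intro powr32) simp
        have "1 / x * (K4 / sqrt (x * u)) = K4 / sqrt u * (1 / (x * sqrt x))"
          by (simp add: real_sqrt_mult)
        then show ?thesis unfolding bnd_def x_def[symmetric] p .
      qed
      finally show ?thesis .
    qed
    have "(\<Sum>A. \<chi>1 (Suc A) / of_nat (Suc A) ^ (n + 1) *
             (\<Sum>B. cnj (\<chi>2 (Suc B)) * of_nat (Suc B) ^ (k - n - 2) *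
                  exp (2 * of_real pi * of_nat (Suc A) * of_nat (Suc B) * X)))
        = (\<Sum>A. \<chi>1 (Suc A) / of_nat (Suc A) ^ (n + 1) * (w A * S A))"
      by (simp only: inner)
    moreover have "norm (\<Sum>A. \<chi>1 (Suc A) / of_nat (Suc A) ^ (n + 1) * (w A * S A)) \<le> suminf bnd"
      by (rule norm_suminf_le[OF tb bs])
    moreover have "suminf bnd = K4 * Z / sqrt u" unfolding bnd_def Z_def
      by (subst suminf_mult[OF summ32]) simp
    ultimately show "norm (\<Sum>A. \<chi>1 (Suc A) / of_nat (Suc A) ^ (n + 1) *
             (\<Sum>B. cnj (\<chi>2 (Suc B)) * of_nat (Suc B) ^ (k - n - 2) *
                  exp (2 * of_real pi * of_nat (Suc A) * of_nat (Suc B) *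
                       (\<i> * of_int a / of_int c - of_real u))))
       \<le> K4 * Z / sqrt u" unfolding X_def by simp
  qed
qed

end
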